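(* Let $q=2$ and let $n,d$ be integers with $d\ge1$ and $n\ge 2d+1$. For all $0\le i\le d-1$ and $1\le j\le d$, $$|G_j(i+1)|<|G_j(i)|.$$
   Context: With $q=2$, for integers $m\ge 0$ and $l$, ${m\brack l}=\prod_{t=1}^{l}\frac{q^{m-t+1}-1}{q^t-1}$ for $l\ge0$ and $0$ for $l<0$. For $0\le i,j\le d$, $$G_j(i)=\sum_{h=\max\{0,i-j\}}^{\min\{i,d-j\}}(-1)^{i-h}q^{j(j-i+h)+\binom{i-h}{2}}{i\brack h}{d-h\brack j}{n-d-i+h\brack n-d-j};$$ these are the eigenvalues of the Grassmann graph $G_q(n,d,j)$ (vertices: $d$-subspaces of $\mathbb F_q^n$, adjacent iff intersection has dimension $d-j$). *)

theory Defs
  imports "HOL-Analysis.Analysis"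
begin

text \<open>Gaussian binomial coefficient with q = 2: for m \<ge> 0 and integer l,
  [m, l] = prod_{t=1}^{l} (q^(m-t+1)-1)/(q^t-1) for l \<ge> 0, and 0 for l < 0.
  The top argument m is an integer assumed nonnegative where used.\<close>
definition qbin :: "int \<Rightarrow> int \<Rightarrow> real" where
  "qbin m l = (if l < 0 then 0 else
     (\<Prod>t\<in>{1..nat l}. ((2::real) powi (m - int t + 1) - 1) / ((2::real) ^ t - 1)))"

text \<open>Eigenvalue G_j(i) of the Grassmann graph G_q(n,d,j), q = 2.\<close>
definition G :: "int \<Rightarrow> int \<Rightarrow> int \<Rightarrow> int \<Rightarrow> real" where
  "G n d j i = (\<Sum>h\<in>{max 0 (i - j) .. min i (d - j)}.
     (-1) ^ nat (i - h) * (2::real) powi (j * (j - i + h) + (i - h) * (i - h - 1) div 2)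
     * qbin i h * qbin (d - h) j * qbin (n - d - i + h) (n - d - j))"

end

theory Submission
  imports Defs
begin


lemma polyD:
  fixes x y z w u :: real
  assumes "0 \<le> x" "0 \<le> y" "0 \<le> z" "0 \<le> w" "0 \<le> u"
  shows "(4*(1+x)*(1+y)*(1+z)-1)*(2*(1+w)-1)*(2*(1+y)-1) < 2*(1+y)*(8*(1+w)*(1+y)*(1+z)*(1+u)-1)*(2*(1+x)-1)*(2*(1+z)-1)"
proof -
  have "2*(1+y)*(8*(1+w)*(1+y)*(1+z)*(1+u)-1)*(2*(1+x)-1)*(2*(1+z)-1) - ((4*(1+x)*(1+y)*(1+z)-1)*(2*(1+w)-1)*(2*(1+y)-1)) = 11 + (16*u + 16*u*w + 32*u*w*x + 64*u*w*x*y + 192*u*w*x*y*z + 128*u*w*x*y*z^2 + 32*u*w*x*y^2 + 96*u*w*x*y^2*z + 64*u*w*x*y^2*z^2 + 96*u*w*x*z + 64*u*w*x*z^2 + 32*u*w*y + 96*u*w*y*z + 64*u*w*y*z^2 + 16*u*w*y^2 + 48*u*w*y^2*z + 32*u*w*y^2*z^2 + 48*u*w*z + 32*u*w*z^2 + 32*u*x + 64*u*x*y + 192*u*x*y*z + 128*u*x*y*z^2 + 32*u*x*y^2 + 96*u*x*y^2*z + 64*u*x*y^2*z^2 + 96*u*x*z + 64*u*x*z^2 + 32*u*y + 96*u*y*z + 64*u*y*z^2 + 16*u*y^2 + 48*u*y^2*z + 32*u*y^2*z^2 + 48*u*z + 32*u*z^2 + 10*w + 24*w*x + 40*w*x*y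 + 168*w*x*y*z + 128*w*x*y*z^2 + 16*w*x*y^2 + 80*w*x*y^2*z + 64*w*x*y^2*z^2 + 88*w*x*z + 64*w*x*z^2 + 12*w*y + 72*w*y*z + 64*w*y*z^2 + 32*w*y^2*z + 32*w*y^2*z^2 + 40*w*z + 32*w*z^2 + 24*x + 48*x*y + 172*x*y*z + 128*x*y*z^2 + 24*x*y^2 + 88*x*y^2*z + 64*x*y^2*z^2 + 84*x*z + 64*x*z^2 + 20*y + 80*y*z + 64*y*z^2 + 8*y^2 + 40*y^2*z + 32*y^2*z^2 + 40*z + 32*z^2)"
    by (simp add: algebra_simps power2_eq_square power3_eq_cube)
  moreover have "0 < 11 + (16*u + 16*u*w + 32*u*w*x + 64*u*w*x*y + 192*u*w*x*y*z + 128*u*w*x*y*z^2 + 32*u*w*x*y^2 + 96*u*w*x*y^2*z + 64*u*w*x*y^2*z^2 + 96*u*w*x*z + 64*u*w*x*z^2 + 32*u*w*y + 96*u*w*y*z + 64*u*w*y*z^2 + 16*u*w*y^2 + 48*u*w*y^2*z + 32*u*w*y^2*z^2 + 48*u*w*z + 32*u*w*z^2 + 32*u*x + 64*u*x*y + 192*u*x*y*z + 128*u*x*y*z^2 + 32*u*x*y^2 + 96*u*x*y^2*z + 64*u*x*y^2*z^2 + 96*u*x*z + 64*u*x*z^2 + 32*u*y + 96*u*y*z + 64*u*y*z^2 + 16*u*y^2 + 48*u*y^2*z + 32*u*y^2*z^2 + 48*u*z + 32*u*z^2 + 10*w + 24*w*x + 40*w*x*y + 168*w*x*y*z + 128*w*x*y*z^2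 + 16*w*x*y^2 + 80*w*x*y^2*z + 64*w*x*y^2*z^2 + 88*w*x*z + 64*w*x*z^2 + 12*w*y + 72*w*y*z + 64*w*y*z^2 + 32*w*y^2*z + 32*w*y^2*z^2 + 40*w*z + 32*w*z^2 + 24*x + 48*x*y + 172*x*y*z + 128*x*y*z^2 + 24*x*y^2 + 88*x*y^2*z + 64*x*y^2*z^2 + 84*x*z + 64*x*z^2 + 20*y + 80*y*z + 64*y*z^2 + 8*y^2 + 40*y^2*z + 32*y^2*z^2 + 40*z + 32*z^2)"
    using assms by (intro add_pos_nonneg add_nonneg_nonneg mult_nonneg_nonneg zero_le_power) auto
  ultimately show ?thesis by linarith
qed

lemma polyDK:
  fixes K E F H S :: real
  assumes "1 \<le> K" "1 \<le> E" "1 \<le> F" "1 \<le> H" "1 \<le> S"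
  shows "(4*K*E*F-1)*(2*H-1)*(2*E-1) < 2*E*(8*H*E*F*S-1)*(2*K-1)*(2*F-1)"
  using polyD[of "K-1" "E-1" "F-1" "H-1" "S-1"] assms by simp

lemma polyA:
  fixes x y z u :: real
  assumes "0 \<le> x" "0 \<le> y" "0 \<le> z" "0 \<le> u"
  shows "(2*(1+z)-1)*2*(1+y)*(4*(1+z)-1)*(16*(1+x)*(1+y)*(1+z)*(1+u)-1) + (2*(1+x)-1)*(8*(1+y)*(1+z)-1)*(2*(1+y)-1)*(4*(1+y)*(1+z)-1) < (4*(1+y)*(1+z)-1)*2*(1+y)*(4*(1+z)-1)*(16*(1+x)*(1+y)*(1+z)*(1+u)-1)"
proof -
  have "(4*(1+y)*(1+z)-1)*2*(1+y)*(4*(1+z)-1)*(16*(1+x)*(1+y)*(1+z)*(1+u)-1) - ((2*(1+z)-1)*2*(1+y)*(4*(1+z)-1)*(16*(1+x)*(1+y)*(1+z)*(1+u)-1) + (2*(1+x)-1)*(8*(1+y)*(1+z)-1)*(2*(1+y)-1)*(4*(1+y)*(1+z)-1)) = 159 + (192*u + 192*u*x + 768*u*x*y + 2560*u*x*y*z + 2816*u*x*y*z^2 + 1024*u*x*y*z^3 + 960*u*x*y^2 + 3200*u*x*y^2*z + 3520*u*x*y^2*z^2 + 1280*u*x*y^2*z^3 + 384*u*x*y^3 + 1280*u*x*y^3*z + 1408*u*x*y^3*z^2 + 512*u*x*y^3*z^3 + 640*u*x*z + 704*u*x*z^2 + 256*u*x*z^3 + 768*u*y + 2560*u*y*z + 2816*u*y*z^2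 + 1024*u*y*z^3 + 960*u*y^2 + 3200*u*y^2*z + 3520*u*y^2*z^2 + 1280*u*y^2*z^3 + 384*u*y^3 + 1280*u*y^3*z + 1408*u*y^3*z^2 + 512*u*y^3*z^3 + 640*u*z + 704*u*z^2 + 256*u*z^3 + 150*x + 580*x*y + 2120*x*y*z + 2560*x*y*z^2 + 1024*x*y*z^3 + 688*x*y^2 + 2608*x*y^2*z + 3200*x*y^2*z^2 + 1280*x*y^2*z^3 + 256*x*y^3 + 1024*x*y^3*z + 1280*x*y^3*z^2 + 512*x*y^3*z^3 + 536*x*z + 640*x*z^2 + 256*x*z^3 + 638*y + 2256*y*z + 2640*y*z^2 + 1024*y*z^3 + 800*y^2 + 2848*y^2*z + 3328*y^2*z^2 + 1280*y^2*z^3 + 320*y^3 + 1152*y^3*z + 1344*y^3*z^2 + 512*y^3*z^3 + 560*z + 656*z^2 + 256*z^3)"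
    by (simp add: algebra_simps power2_eq_square power3_eq_cube)
  moreover have "0 < 159 + (192*u + 192*u*x + 768*u*x*y + 2560*u*x*y*z + 2816*u*x*y*z^2 + 1024*u*x*y*z^3 + 960*u*x*y^2 + 3200*u*x*y^2*z + 3520*u*x*y^2*z^2 + 1280*u*x*y^2*z^3 + 384*u*x*y^3 + 1280*u*x*y^3*z + 1408*u*x*y^3*z^2 + 512*u*x*y^3*z^3 + 640*u*x*z + 704*u*x*z^2 + 256*u*x*z^3 + 768*u*y + 2560*u*y*z + 2816*u*y*z^2 + 1024*u*y*z^3 + 960*u*y^2 + 3200*u*y^2*z + 3520*u*y^2*z^2 + 1280*u*y^2*z^3 + 384*u*y^3 + 1280*u*y^3*z + 1408*u*y^3*z^2 + 512*u*y^3*z^3 + 640*u*z + 704*u*z^2 + 256*u*z^3 + 150*x + 580*x*y + 2120*x*y*z + 2560*x*y*z^2 + 1024*x*y*z^3 + 688*x*y^2 + 2608*x*y^2*z + 3200*x*y^2*z^2 + 1280*x*y^2*z^3 + 256*x*y^3 + 1024*x*y^3*z + 1280*x*y^3*z^2 + 512*x*y^3*z^3 + 536*x*z + 640*x*z^2 + 256*x*z^3 + 638*y + 2256*y*z + 2640*y*z^2 + 1024*y*z^3 + 800*y^2 + 2848*y^2*z + 3328*y^2*z^2 + 1280*y^2*z^3 + 320*y^3 + 1152*y^3*z + 1344*y^3*z^2 + 512*y^3*z^3 + 560*z + 656*z^2 + 256*z^3)"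
    using assms by (intro add_pos_nonneg add_nonneg_nonneg mult_nonneg_nonneg zero_le_power) auto
  ultimately show ?thesis by linarith
qed

lemma polyAK:
  fixes G J P S :: real
  assumes "1 \<le> G" "1 \<le> J" "1 \<le> P" "1 \<le> S"
  shows "(2*P-1)*2*J*(4*P-1)*(16*G*J*P*S-1) + (2*G-1)*(8*J*P-1)*(2*J-1)*(4*J*P-1) < (4*J*P-1)*2*J*(4*P-1)*(16*G*J*P*S-1)"
  using polyA[of "G-1" "J-1" "P-1" "S-1"] assms by simp

lemma polyB:
  fixes x y z u :: real
  assumes "0 \<le> x" "0 \<le> y" "0 \<le> z" "0 \<le> u"
  shows "(2*(1+z)-1)*((4*(1+x)*(1+y)-1) + (2*(1+x)-1)*(4*(1+y)*(1+z)-1)) < 2*(1+z)*(2*(1+y)-1)*(8*(1+x)*(1+z)*(1+u)-1)"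
proof -
  have "2*(1+z)*(2*(1+y)-1)*(8*(1+x)*(1+z)*(1+u)-1) - ((2*(1+z)-1)*((4*(1+x)*(1+y)-1) + (2*(1+x)-1)*(4*(1+y)*(1+z)-1))) = 8 + (16*u + 16*u*x + 32*u*x*y + 64*u*x*y*z + 32*u*x*y*z^2 + 32*u*x*z + 16*u*x*z^2 + 32*u*y + 64*u*y*z + 32*u*y*z^2 + 32*u*z + 16*u*z^2 + 6*x + 20*x*y + 32*x*y*z + 16*x*y*z^2 + 4*x*z + 20*y + 40*y*z + 24*y*z^2 + 14*z + 8*z^2)"
    by (simp add: algebra_simps power2_eq_square power3_eq_cube)
  moreover have "0 < 8 + (16*u + 16*u*x + 32*u*x*y + 64*u*x*y*z + 32*u*x*y*z^2 + 32*u*x*z + 16*u*x*z^2 + 32*u*y + 64*u*y*z + 32*u*y*z^2 + 32*u*z + 16*u*z^2 + 6*x + 20*x*y + 32*x*y*z + 16*x*y*z^2 + 4*x*z + 20*y + 40*y*z + 24*y*z^2 + 14*z + 8*z^2)"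
    using assms by (intro add_pos_nonneg add_nonneg_nonneg mult_nonneg_nonneg zero_le_power) auto
  ultimately show ?thesis by linarith
qed

lemma polyBK:
  fixes G A E S :: real
  assumes "1 \<le> G" "1 \<le> A" "1 \<le> E" "1 \<le> S"
  shows "(2*E-1)*((4*G*A-1) + (2*G-1)*(4*A*E-1)) < 2*E*(2*A-1)*(8*G*E*S-1)"
  using polyB[of "G-1" "A-1" "E-1" "S-1"] assms by simp


definition Fq :: "nat \<Rightarrow> real" where "Fq m = (\<Prod>t\<in>{1..m}. 2^t - 1)"

lemma Fq_0[simp]: "Fq 0 = 1" by (simp add: Fq_def)
lemma Fq_Suc: "Fq (Suc m) = Fq m * (2^Suc m - 1)"
  by (simp add: Fq_def prod.nat_ivl_Suc')
lemma Fq_pos: "Fq m > 0"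
proof (induction m)
  case (Suc m)
  have "(1::real) \<le> 2^m" by simp
  then have p: "(2::real)^Suc m - 1 > 0" by (simp only: power_Suc)
  show ?case unfolding Fq_Suc using Suc.IH p by (rule mult_pos_pos)
qed simp

definition Qn :: "nat \<Rightarrow> nat \<Rightarrow> real" where "Qn M L = Fq M / (Fq L * Fq (M - L))"

lemma Qn_pos: "Qn M L > 0" using Fq_pos[of M] Fq_pos[of L] Fq_pos[of "M-L"] by (simp add: Qn_def)

lemma qbin_prod: "L \<le> M \<Longrightarrow> (\<Prod>t\<in>{1..L}. ((2::real) powi (int M - int t + 1) - 1) / (2 ^ t - 1)) = Qn M L"
proof (induction L)
  case 0 then show ?case using Fq_pos[of M] by (simp add: Qn_def)
next
  case (Suc L)
  have e: "(2::real) powi (int M - int L) = 2 ^ (M - L)"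
  proof -
    have x: "int M - int L = int (M - L)" using Suc.prems by simp
    show ?thesis unfolding x by (rule power_int_of_nat)
  qed
  have ml: "M - L = Suc (M - Suc L)" using Suc.prems by simp
  have "(\<Prod>t\<in>{1..Suc L}. ((2::real) powi (int M - int t + 1) - 1) / (2 ^ t - 1))
     = Qn M L * ((2^(M-L) - 1) / (2^Suc L - 1))"
    using Suc by (simp add: prod.nat_ivl_Suc' e)
  also have "\<dots> = Qn M (Suc L)"
  proof -
    have a: "(2::real)^(M-L) - 1 > 0" using Suc.prems by simp
    have b: "(2::real)^(Suc L) - 1 > 0" by (simp del: power_Suc)
    have f1: "Fq (M - L) = Fq (M - Suc L) * (2^(M-L) - 1)" by (simp only: ml Fq_Suc)
    show ?thesis unfolding Qn_def f1 Fq_Suc[of L] diff_Suc_eq_diff_pred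
      using a b by (simp add: divide_simps del: power_Suc)
  qed
  finally show ?case .
qed

lemma qbin_nat: assumes "L \<le> M" shows "qbin (int M) (int L) = Qn M L"
proof -
  have "qbin (int M) (int L) = (\<Prod>t\<in>{1..L}. ((2::real) powi (int M - int t + 1) - 1) / (2 ^ t - 1))"
    unfolding qbin_def by simp
  also have "\<dots> = Qn M L" using assms by (rule qbin_prod)
  finally show ?thesis .
qed

definition tri :: "nat \<Rightarrow> nat" where "tri k = k * (k - 1) div 2"

definition Tm :: "nat \<Rightarrow> nat \<Rightarrow> nat \<Rightarrow> nat \<Rightarrow> nat \<Rightarrow> real" where
  "Tm n d j i h = 2^(j*(j+h-i) + tri (i-h)) * Qn i h * Qn (d-h) j * Qn (n-d-i+h) (n-d-j)"


lemma tri_int: "int k * (int k - 1) div 2 = int (tri k)"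
proof (cases k)
  case 0 then show ?thesis by (simp add: tri_def)
next
  case (Suc m)
  then have x: "int k - 1 = int (k - 1)" by simp
  show ?thesis unfolding tri_def zdiv_int of_nat_mult x by simp
qed

lemma G_nat:
  assumes "i \<le> d" "j \<le> d" "d + d \<le> n"
  shows "G (int n) (int d) (int j) (int i) = (\<Sum>h\<in>{i-j..min i (d-j)}. (-1)^(i-h) * Tm n d j i h)"
proof -
  have s: "{max 0 (int i - int j) .. min (int i) (int d - int j)} = int ` {i-j..min i (d-j)}"
  proof -
    have "max 0 (int i - int j) = int (i - j)" by simp
    moreover have "min (int i) (int d - int j) = int (min i (d-j))" using assms by simp
    ultimately show ?thesis by (simp add: image_int_atLeastAtMost)
  qed
  have t: "(-1) ^ nat (int i - int h) *
     (2::real) powi (int j * (int j - int i + int h) + (int i - int h) * (int i - int h - 1) div 2) *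
     qbin (int i) (int h) * qbin (int d - int h) (int j) *
     qbin (int n - int d - int i + int h) (int n - int d - int j)
     = (-1)^(i-h) * Tm n d j i h" if h: "h \<in> {i-j..min i (d-j)}" for h
  proof -
    from h have h1: "i - j \<le> h" "h \<le> i" "h \<le> d - j" by auto
    have e1: "int i - int h = int (i-h)" using h1 by simp
    have e2: "int d - int h = int (d-h)" using h1 assms by simp
    have e3: "int n - int d - int i + int h = int (n-d-i+h)" using h1 assms by simp
    have e4: "int n - int d - int j = int (n-d-j)" using h1 assms by simp
    have e5: "int j * (int j - int i + int h) + (int i - int h) * (int i - int h - 1) div 2
        = int (j*(j+h-i) + tri (i-h))"
    proof -
      have x: "int j - int i + int h = int (j+h-i)" using h1 by simp
      show ?thesis unfolding x e1 tri_int[of "i-h"] by (simp only: of_nat_add of_nat_mult)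
    qed
    have q1: "qbin (int i) (int h) = Qn i h" using h1 by (simp add: qbin_nat)
    have q2: "qbin (int (d-h)) (int j) = Qn (d-h) j" using h1 assms by (intro qbin_nat) simp
    have q3: "qbin (int (n-d-i+h)) (int (n-d-j)) = Qn (n-d-i+h) (n-d-j)" using h1 assms by (intro qbin_nat) simp
    show ?thesis unfolding e5 power_int_of_nat unfolding e2 e3 e4 q1 q2 q3 e1 nat_int Tm_def by simp
  qed
  have "G (int n) (int d) (int j) (int i) = (\<Sum>h\<in>int ` {i-j..min i (d-j)}.
     (-1) ^ nat (int i - h) *
     (2::real) powi (int j * (int j - int i + h) + (int i - h) * (int i - h - 1) div 2) *
     qbin (int i) h * qbin (int d - h) (int j) *
     qbin (int n - int d - int i + h) (int n - int d - int j))"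
    unfolding G_def s by simp
  also have "\<dots> = (\<Sum>h\<in>{i-j..min i (d-j)}. (-1)^(i-h) * Tm n d j i h)"
    by (subst sum.reindex) (auto intro!: sum.cong simp: t)
  finally show ?thesis .
qed


lemma alt_aux:
  fixes f :: "nat \<Rightarrow> real"
  assumes f0: "0 \<le> f lo" and mono: "\<And>h. lo \<le> h \<Longrightarrow> h < hi \<Longrightarrow> f h \<le> f (Suc h)"
  shows "m \<le> hi \<Longrightarrow> lo \<le> m \<Longrightarrow> 0 \<le> (\<Sum>h=lo..m. (-1)^(m-h) * f h) \<and> (\<Sum>h=lo..m. (-1)^(m-h) * f h) \<le> f m
     \<and> (lo < m \<longrightarrow> f m - f (m-1) \<le> (\<Sum>h=lo..m. (-1)^(m-h) * f h))"
proof (induction m)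
  case 0
  then show ?case using f0 by simp
next
  case (Suc m)
  show ?case
  proof (cases "lo = Suc m")
    case True
    then show ?thesis using f0 by simp
  next
    case False
    then have lm: "lo \<le> m" using Suc.prems by simp
    have IH: "0 \<le> (\<Sum>h=lo..m. (-1)^(m-h) * f h) \<and> (\<Sum>h=lo..m. (-1)^(m-h) * f h) \<le> f m"
      using Suc.IH Suc.prems lm by simp
    have fm: "f m \<le> f (Suc m)" using mono[of m] lm Suc.prems by simp
    have neg: "(\<Sum>h=lo..m. (-1)^(Suc m-h) * f h) = - (\<Sum>h=lo..m. (-1)^(m-h) * f h)"
      unfolding sum_negf[symmetric]
    proof (rule sum.cong)
      fix h assume "h \<in> {lo..m}"
      then have "Suc m - h = Suc (m - h)" by auto
      then show "(-1)^(Suc m-h) * f h = - ((-1)^(m-h) * f h)" by simp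
    qed simp
    have "(\<Sum>h=lo..Suc m. (-1)^(Suc m-h) * f h) = f (Suc m) - (\<Sum>h=lo..m. (-1)^(m-h) * f h)"
      using lm by (simp add: sum.cl_ivl_Suc neg)
    then show ?thesis using IH fm by auto
  qed
qed

lemma alt_sum:
  fixes f :: "nat \<Rightarrow> real"
  assumes "lo \<le> hi" "0 \<le> f lo" "\<And>h. lo \<le> h \<Longrightarrow> h < hi \<Longrightarrow> f h \<le> f (Suc h)"
  shows "0 \<le> (\<Sum>h=lo..hi. (-1)^(hi-h) * f h)" "(\<Sum>h=lo..hi. (-1)^(hi-h) * f h) \<le> f hi"
     "lo < hi \<Longrightarrow> f hi - f (hi-1) \<le> (\<Sum>h=lo..hi. (-1)^(hi-h) * f h)"
  using alt_aux[of f lo hi hi, OF assms(2,3)] assms(1) by auto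


lemma Fq_nz[simp]: "Fq m \<noteq> 0" using Fq_pos[of m] by simp

lemma Fq_step: "m = Suc m' \<Longrightarrow> (2::real)^m = v \<Longrightarrow> Fq m = Fq m' * (v - 1)"
  by (simp add: Fq_Suc)

lemma one_le_mult': "1 \<le> (a::real) \<Longrightarrow> 1 \<le> b \<Longrightarrow> 1 \<le> a*b"
  using mult_mono[of 1 a 1 b] by simp

lemma div_le_div_cross: "0 < (b::real) \<Longrightarrow> 0 < d \<Longrightarrow> a*d \<le> c*b \<Longrightarrow> a/b \<le> c/d"
  by (simp add: field_simps)

lemma tri_Suc: "tri (Suc k) = tri k + k"
proof (induction k)
  case 0 then show ?case by (simp add: tri_def)
next
  case (Suc k)
  have "Suc (Suc k) * (Suc (Suc k) - 1) = Suc k * (Suc k - 1) + 2 * Suc k" by simp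
  then show ?case unfolding tri_def by simp
qed

lemma pow2_gt1: "1 \<le> m \<Longrightarrow> (2::real)^m - 1 > 0"
proof -
  assume "1 \<le> m"
  then have "(2::real)^1 \<le> 2^m" by (intro power_increasing) auto
  then show ?thesis by simp
qed


lemma monoD:
  fixes h k e f s :: nat
  defines "d \<equiv> h+k+2+e+f" and "i \<equiv> h+1+k" and "j \<equiv> k+1+e"
  shows "Tm (d+d+1+s) d j i h \<le> Tm (d+d+1+s) d j i (Suc h)"
proof -
  define n where "n = d+d+1+s"
  have a1: "j + h - i = e" "i - h = Suc k" "d - h = k+2+e+f" "n - d - i + h = h+2+e+f+s" "n - d - j = h+2+f+s"
    by (simp_all add: d_def i_def j_def n_def)
  have a2: "j + Suc h - i = Suc e" "i - Suc h = k" "d - Suc h = k+1+e+f" "n - d - i + Suc h = h+3+e+f+s"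
    by (simp_all add: d_def i_def j_def n_def)
  have t1: "Tm n d j i h = 2^(j*e + tri k + k) * Qn (h+1+k) h * Qn (k+2+e+f) (k+1+e) * Qn (h+2+e+f+s) (h+2+f+s)"
    unfolding Tm_def a1 tri_Suc by (simp add: i_def j_def add.assoc)
  have t2: "Tm n d j i (Suc h) = 2^(j*e + tri k) * 2^(k+1+e) * Qn (h+1+k) (Suc h) * Qn (k+1+e+f) (k+1+e) * Qn (h+3+e+f+s) (h+2+f+s)"
    unfolding Tm_def a1 a2 by (simp add: i_def j_def power_add)
  define X where "X = (2::real)^(j*e + tri k)"
  define K where "K = (2::real)^k"
  define E where "E = (2::real)^e"
  define F where "F = (2::real)^f"
  define H where "H = (2::real)^h"
  define S where "S = (2::real)^s"
  have ge: "1 \<le> K" "1 \<le> E" "1 \<le> F" "1 \<le> H" "1 \<le> S" "0 < X"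
    by (simp_all add: K_def E_def F_def H_def S_def X_def)
  have P: "(2::real)^(k+2+e+f) = 4*K*E*F" "(2::real)^Suc k = 2*K" "(2::real)^Suc f = 2*F"
    "(2::real)^Suc h = 2*H" "(2::real)^Suc e = 2*E" "(2::real)^(h+3+e+f+s) = 8*H*E*F*S"
    "(2::real)^(k+1+e) = 2*K*E" "(2::real)^(j*e + tri k + k) = X * K" "(2::real)^(j*e + tri k) = X"
    by (simp_all add: K_def E_def F_def H_def S_def X_def power_add)
  have q: "Qn (h+1+k) h = Fq (h+1+k) / (Fq h * Fq (Suc k))"
    "Qn (k+2+e+f) (k+1+e) = Fq (k+2+e+f) / (Fq (k+1+e) * Fq (Suc f))"
    "Qn (h+2+e+f+s) (h+2+f+s) = Fq (h+2+e+f+s) / (Fq (h+2+f+s) * Fq e)"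
    "Qn (h+1+k) (Suc h) = Fq (h+1+k) / (Fq (Suc h) * Fq k)"
    "Qn (k+1+e+f) (k+1+e) = Fq (k+1+e+f) / (Fq (k+1+e) * Fq f)"
    "Qn (h+3+e+f+s) (h+2+f+s) = Fq (h+3+e+f+s) / (Fq (h+2+f+s) * Fq (Suc e))"
    by (simp_all add: Qn_def)
  have fq: "Fq (Suc k) = Fq k * (2*K - 1)" "Fq (k+2+e+f) = Fq (k+1+e+f) * (4*K*E*F - 1)"
    "Fq (Suc f) = Fq f * (2*F - 1)" "Fq (Suc h) = Fq h * (2*H - 1)"
    "Fq (h+3+e+f+s) = Fq (h+2+e+f+s) * (8*H*E*F*S - 1)" "Fq (Suc e) = Fq e * (2*E - 1)"
    by (rule Fq_step[OF _ P(2)] Fq_step[OF _ P(1)] Fq_step[OF _ P(3)] Fq_step[OF _ P(4)]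
      Fq_step[OF _ P(6)] Fq_step[OF _ P(5)]; simp)+
  define C where "C = X * Fq (h+1+k) * Fq (k+1+e+f) * Fq (h+2+e+f+s) / (Fq h * Fq k * Fq (k+1+e) * Fq f * Fq (h+2+f+s) * Fq e)"
  have Cp: "0 < C" unfolding C_def using ge Fq_pos by simp
  have nz: "2*K - 1 \<noteq> 0" "4*K*E*F - 1 \<noteq> 0" "2*F - 1 \<noteq> 0" "2*H-1 \<noteq> 0" "8*H*E*F*S - 1 \<noteq> 0" "2*E-1 \<noteq> 0"
  proof -
    have "1 \<le> K*E*F" "1 \<le> H*E*F*S" using ge by (simp_all add: one_le_mult')
    then show "2*K - 1 \<noteq> 0" "4*K*E*F - 1 \<noteq> 0" "2*F - 1 \<noteq> 0" "2*H-1 \<noteq> 0" "8*H*E*F*S - 1 \<noteq> 0" "2*E-1 \<noteq> 0"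
      using ge by linarith+
  qed
  have r1: "Tm n d j i h = C * (K*(4*K*E*F-1)/((2*K-1)*(2*F-1)))"
    unfolding t1 q fq P C_def using nz by (simp add: field_simps)
  have r2: "Tm n d j i (Suc h) = C * (2*K*E*(8*H*E*F*S-1)/((2*H-1)*(2*E-1)))"
    unfolding t2 q fq P C_def using nz by (simp add: field_simps)
  have "K*(4*K*E*F-1)/((2*K-1)*(2*F-1)) \<le> 2*K*E*(8*H*E*F*S-1)/((2*H-1)*(2*E-1))"
  proof (rule div_le_div_cross)
    show "0 < (2*K-1)*(2*F-1)" "0 < (2*H-1)*(2*E-1)" using ge by simp_all
    have "(4*K*E*F-1)*(2*H-1)*(2*E-1) \<le> 2*E*(8*H*E*F*S-1)*(2*K-1)*(2*F-1)"
      using polyDK[OF ge(1-5)] by simp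
    then have "K*((4*K*E*F-1)*(2*H-1)*(2*E-1)) \<le> K*(2*E*(8*H*E*F*S-1)*(2*K-1)*(2*F-1))"
      using ge by (intro mult_left_mono) simp_all
    then show "K*(4*K*E*F-1) * ((2*H-1)*(2*E-1)) \<le> 2*K*E*(8*H*E*F*S-1) * ((2*K-1)*(2*F-1))"
      by (simp add: algebra_simps)
  qed
  then show ?thesis unfolding n_def[symmetric] r1 r2 using Cp by (intro mult_left_mono) simp_all
qed


lemma Qn_self[simp]: "Qn M M = 1" by (simp add: Qn_def)

lemma caseA:
  fixes g b p s :: nat
  defines "d \<equiv> g+b+p+3" and "j \<equiv> Suc b"
  shows "Tm (d+d+1+s) d j (Suc (Suc g)) (Suc (Suc g)) + Tm (d+d+1+s) d j (Suc g) g < Tm (d+d+1+s) d j (Suc g) (Suc g)"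
proof -
  define n where "n = d+d+1+s"
  have a0: "j + Suc g - Suc g = j" "Suc g - Suc g = 0" "d - Suc g = b+p+2" "n - d - Suc g + Suc g = g+b+p+4+s" "n - d - j = g+p+3+s"
    by (simp_all add: d_def j_def n_def)
  have a1: "j + Suc (Suc g) - Suc (Suc g) = j" "Suc (Suc g) - Suc (Suc g) = 0" "d - Suc (Suc g) = b+p+1" "n - d - Suc (Suc g) + Suc (Suc g) = g+b+p+4+s"
    by (simp_all add: d_def j_def n_def)
  have a2: "j + g - Suc g = b" "Suc g - g = 1" "d - g = b+p+3" "n - d - Suc g + g = g+b+p+3+s"
    by (simp_all add: d_def j_def n_def)
  have tri01: "tri 0 = 0" "tri 1 = 0" by (simp_all add: tri_def)
  have t0: "Tm n d j (Suc g) (Suc g) = 2^(j*j) * Qn (b+p+2) j * Qn (g+b+p+4+s) (g+p+3+s)"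
    unfolding Tm_def a0 tri01 by simp
  have t1: "Tm n d j (Suc (Suc g)) (Suc (Suc g)) = 2^(j*j) * Qn (b+p+1) j * Qn (g+b+p+4+s) (g+p+3+s)"
    unfolding Tm_def a1 a0(5) tri01 by simp
  have t2: "Tm n d j (Suc g) g = 2^(j*b) * Qn (Suc g) g * Qn (b+p+3) j * Qn (g+b+p+3+s) (g+p+3+s)"
    unfolding Tm_def a2 a0(5) tri01 by simp
  define Y where "Y = (2::real)^(j*b)"
  define G where "G = (2::real)^g"
  define J where "J = (2::real)^b"
  define P where "P = (2::real)^p"
  define S where "S = (2::real)^s"
  have ge: "1 \<le> G" "1 \<le> J" "1 \<le> P" "1 \<le> S" "0 < Y"
    by (simp_all add: G_def J_def P_def S_def Y_def)
  have PW: "(2::real)^(j*j) = Y * (2*J)" "(2::real)^Suc g = 2*G" "(2::real)^Suc b = 2*J"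
    "(2::real)^(b+p+2) = 4*J*P" "(2::real)^(b+p+3) = 8*J*P" "(2::real)^Suc p = 2*P" "(2::real)^(p+2) = 4*P"
    "(2::real)^(g+b+p+4+s) = 16*G*J*P*S" "(2::real)^(j*b) = Y"
    by (simp_all add: G_def J_def P_def S_def Y_def j_def power_add algebra_simps)
  have q: "Qn (b+p+2) j = Fq (b+p+2) / (Fq (Suc b) * Fq (Suc p))"
    "Qn (b+p+1) j = Fq (b+p+1) / (Fq (Suc b) * Fq p)"
    "Qn (b+p+3) j = Fq (b+p+3) / (Fq (Suc b) * Fq (p+2))"
    "Qn (g+b+p+4+s) (g+p+3+s) = Fq (g+b+p+4+s) / (Fq (g+p+3+s) * Fq (Suc b))"
    "Qn (g+b+p+3+s) (g+p+3+s) = Fq (g+b+p+3+s) / (Fq (g+p+3+s) * Fq b)"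
    "Qn (Suc g) g = Fq (Suc g) / Fq g"
    by (simp_all add: Qn_def j_def Fq_Suc[of 0])
  define u1 where "u1 = 2*J - 1"
  define u2 where "u2 = 4*J*P - 1"
  define u3 where "u3 = 2*P - 1"
  define u4 where "u4 = 16*G*J*P*S - 1"
  define u5 where "u5 = 2*G - 1"
  define u6 where "u6 = 8*J*P - 1"
  define u7 where "u7 = 4*P - 1"
  have fq1: "Fq (Suc b) = Fq b * (2*J - 1)" "Fq (b+p+2) = Fq (b+p+1) * (4*J*P - 1)"
    "Fq (Suc p) = Fq p * (2*P - 1)" "Fq (g+b+p+4+s) = Fq (g+b+p+3+s) * (16*G*J*P*S - 1)"
    "Fq (Suc g) = Fq g * (2*G - 1)"
    by (rule Fq_step[OF _ PW(3)] Fq_step[OF _ PW(4)] Fq_step[OF _ PW(6)] Fq_step[OF _ PW(8)]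
      Fq_step[OF _ PW(2)]; simp)+
  have fq2: "Fq (b+p+3) = Fq (b+p+2) * (8*J*P - 1)" "Fq (p+2) = Fq (Suc p) * (4*P - 1)"
    by (rule Fq_step[OF _ PW(5)] Fq_step[OF _ PW(7)]; simp)+
  define C where "C = Y * Fq (b+p+1) * Fq (g+b+p+3+s) / (Fq b * Fq b * Fq p * Fq (g+p+3+s))"
  have Cp: "0 < C" unfolding C_def using ge Fq_pos by simp
  have nz: "2*J - 1 \<noteq> 0" "4*J*P - 1 \<noteq> 0" "2*P - 1 \<noteq> 0" "16*G*J*P*S - 1 \<noteq> 0" "2*G-1 \<noteq> 0"
     "8*J*P - 1 \<noteq> 0" "4*P - 1 \<noteq> 0"
  proof -
    have "1 \<le> J*P" "1 \<le> G*J*P*S" using ge by (simp_all add: one_le_mult')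
    then show "2*J - 1 \<noteq> 0" "4*J*P - 1 \<noteq> 0" "2*P - 1 \<noteq> 0" "16*G*J*P*S - 1 \<noteq> 0" "2*G-1 \<noteq> 0"
     "8*J*P - 1 \<noteq> 0" "4*P - 1 \<noteq> 0"
      using ge by linarith+
  qed
  note nzu = nz[folded u1_def u2_def u3_def u4_def u5_def u6_def u7_def]
  note fqu = fq1[folded u1_def u2_def u3_def u4_def u5_def u6_def u7_def] fq2[folded u1_def u2_def u3_def u4_def u5_def u6_def u7_def]
  define Dn where "Dn = u1*u1*u3*u7"
  have r0: "Tm n d j (Suc g) (Suc g) = C * (2*J*u2*u4*u7) / Dn"
    unfolding t0 q fqu PW C_def Dn_def using nzu by (simp add: field_simps)
  have r1: "Tm n d j (Suc (Suc g)) (Suc (Suc g)) = C * (2*J*u4*u3*u7) / Dn"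
    unfolding t1 q fqu PW C_def Dn_def using nzu by (simp add: field_simps)
  have r2: "Tm n d j (Suc g) g = C * (u5*u2*u6*u1) / Dn"
    unfolding t2 q fqu PW C_def Dn_def using nzu by (simp add: field_simps)
  have Dp: "0 < Dn" unfolding Dn_def u1_def u3_def u7_def using ge by simp
  have "2*J*(16*G*J*P*S-1)*(2*P-1)*(4*P-1) + (2*G-1)*(4*J*P-1)*(8*J*P-1)*(2*J-1)
      < 2*J*(4*J*P-1)*(16*G*J*P*S-1)*(4*P-1)"
    using polyAK[OF ge(1-4)] by (simp add: algebra_simps)
  then have "C * (2*J*(16*G*J*P*S-1)*(2*P-1)*(4*P-1)) + C * ((2*G-1)*(4*J*P-1)*(8*J*P-1)*(2*J-1))
      < C * (2*J*(4*J*P-1)*(16*G*J*P*S-1)*(4*P-1))"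
    using Cp by (simp add: distrib_left[symmetric])
  then show ?thesis unfolding n_def[symmetric] r0 r1 r2 u1_def u2_def u3_def u4_def u5_def u6_def u7_def using Dp by (simp add: add_divide_distrib[symmetric] divide_strict_right_mono)
qed


lemma Qn_zero[simp]: "Qn M 0 = 1" by (simp add: Qn_def)

lemma caseA0:
  fixes b p s :: nat
  defines "d \<equiv> b+p+2" and "j \<equiv> Suc b"
  shows "Tm (d+d+1+s) d j 1 1 < Tm (d+d+1+s) d j 0 0"
proof -
  define n where "n = d+d+1+s"
  have t0: "Tm n d j 0 0 = (2^(j*j) * Qn (n-d) (n-d-j)) * Qn (b+p+2) j"
    unfolding Tm_def by (simp add: tri_def d_def)
  have a: "n - d - 1 + 1 = n - d" "d - 1 = b+p+1" by (simp_all add: n_def d_def)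
  have t1: "Tm n d j 1 1 = (2^(j*j) * Qn (n-d) (n-d-j)) * Qn (b+p+1) j"
    unfolding Tm_def a by (simp add: tri_def)
  define J where "J = (2::real)^b"
  define P where "P = (2::real)^p"
  have ge: "1 \<le> J" "1 \<le> P" by (simp_all add: J_def P_def)
  have PW: "(2::real)^Suc b = 2*J" "(2::real)^(b+p+2) = 4*J*P" "(2::real)^Suc p = 2*P"
    by (simp_all add: J_def P_def power_add)
  have q: "Qn (b+p+2) j = Fq (b+p+2) / (Fq (Suc b) * Fq (Suc p))"
    "Qn (b+p+1) j = Fq (b+p+1) / (Fq (Suc b) * Fq p)"
    by (simp_all add: Qn_def j_def)
  define u2 where "u2 = 4*J*P - 1"
  define u3 where "u3 = 2*P - 1"
  have fq: "Fq (b+p+2) = Fq (b+p+1) * u2" "Fq (Suc p) = Fq p * u3"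
    unfolding u2_def u3_def by (rule Fq_step[OF _ PW(2)] Fq_step[OF _ PW(3)]; simp)+
  have JP: "P \<le> J*P" using mult_right_mono[of 1 J P] ge by simp
  have u: "0 < u3" "u3 < u2" unfolding u2_def u3_def using ge JP by simp_all
  have "Qn (b+p+2) j = Qn (b+p+1) j * (u2 / u3)"
    unfolding q fq using u by (simp add: field_simps)
  moreover have "Qn (b+p+1) j * 1 < Qn (b+p+1) j * (u2 / u3)"
    using u by (intro mult_strict_left_mono Qn_pos) simp_all
  ultimately have "Qn (b+p+1) j < Qn (b+p+2) j" by simp
  moreover have "0 < 2^(j*j) * Qn (n-d) (n-d-j)" using Qn_pos by simp
  ultimately show ?thesis unfolding n_def[symmetric] t0 t1 by (rule mult_strict_left_mono)
qed

lemma caseB0: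
  fixes a e s :: nat
  defines "d \<equiv> a+1+e" and "j \<equiv> a+1+e"
  shows "Tm (d+d+1+s) d j (Suc a) 0 < Tm (d+d+1+s) d j a 0"
proof -
  define n where "n = d+d+1+s"
  have a0: "j - a = Suc e" "n - d - a = e+s+2" "n - d - j = Suc s" "j - Suc a = e" "n - d - Suc a = e+s+1"
    by (simp_all add: d_def j_def n_def)
  have t0: "Tm n d j a 0 = 2^(j*Suc e + tri a) * Qn (e+s+2) (Suc s)"
    unfolding Tm_def a0 by (simp add: d_def j_def)
  have t1: "Tm n d j (Suc a) 0 = 2^(j*e + (tri a + a)) * Qn (e+s+1) (Suc s)"
    unfolding Tm_def a0 by (simp add: d_def j_def tri_Suc)
  define Y where "Y = (2::real)^(j*e + tri a)"
  define A where "A = (2::real)^a"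
  define E where "E = (2::real)^e"
  define S where "S = (2::real)^s"
  have ge: "1 \<le> A" "1 \<le> E" "1 \<le> S" "0 < Y" by (simp_all add: A_def E_def S_def Y_def)
  have PW: "(2::real)^(j*Suc e + tri a) = Y*(2*A*E)" "(2::real)^(j*e + (tri a + a)) = Y*A"
    "(2::real)^(e+s+2) = 4*E*S" "(2::real)^Suc e = 2*E"
    by (simp_all add: Y_def A_def E_def S_def j_def power_add algebra_simps)
  have q: "Qn (e+s+2) (Suc s) = Fq (e+s+2) / (Fq (Suc s) * Fq (Suc e))"
    "Qn (e+s+1) (Suc s) = Fq (e+s+1) / (Fq (Suc s) * Fq e)"
    by (simp_all add: Qn_def)
  define w4 where "w4 = 4*E*S - 1"
  define w5 where "w5 = 2*E - 1"
  have fq: "Fq (e+s+2) = Fq (e+s+1) * w4" "Fq (Suc e) = Fq e * w5"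
    unfolding w4_def w5_def by (rule Fq_step[OF _ PW(3)] Fq_step[OF _ PW(4)]; simp)+
  have ES: "1 \<le> E*S" using ge by (simp add: one_le_mult')
  have w4g: "3 \<le> w4" unfolding w4_def using ES by simp
  have m3: "2*E*3 \<le> 2*E*w4" using w4g ge by (intro mult_left_mono) simp_all
  have w51: "0 < w5" unfolding w5_def using ge by simp
  have w52: "w5 < 2*E*w4" unfolding w5_def using ge m3 by linarith
  note v = w51 w52
  define C where "C = Y * A * Fq (e+s+1) / (Fq (Suc s) * Fq e)"
  have Cp: "0 < C" unfolding C_def using ge Fq_pos by simp
  have r0: "Tm n d j a 0 = C * (2*E*w4/w5)" unfolding t0 PW q fq C_def using v by (simp add: field_simps)
  have r1: "Tm n d j (Suc a) 0 = C" unfolding t1 PW q fq C_def by (simp add: field_simps)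
  have "1 < 2*E*w4/w5" using v by simp
  then have "C * 1 < C * (2*E*w4/w5)" using Cp by (rule mult_strict_left_mono)
  then show ?thesis unfolding n_def[symmetric] r0 r1 by simp
qed


lemma caseB:
  fixes g a e s :: nat
  defines "d \<equiv> g+a+e+2" and "j \<equiv> a+1+e" and "i \<equiv> Suc g + a"
  shows "Tm (d+d+1+s) d j (Suc i) (Suc g) + Tm (d+d+1+s) d j i g < Tm (d+d+1+s) d j i (Suc g)"
proof -
  define n where "n = d+d+1+s"
  have a0: "j + Suc g - i = Suc e" "i - Suc g = a" "d - Suc g = j" "n - d - i + Suc g = g+e+s+3" "n - d - j = g+s+2"
    by (simp_all add: d_def j_def i_def n_def)
  have a1: "j + Suc g - Suc i = e" "Suc i - Suc g = Suc a" "n - d - Suc i + Suc g = g+e+s+2"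
    by (simp_all add: d_def j_def i_def n_def)
  have a2: "j + g - i = e" "i - g = Suc a" "d - g = Suc j" "n - d - i + g = g+e+s+2"
    by (simp_all add: d_def j_def i_def n_def)
  have t0: "Tm n d j i (Suc g) = 2^(j*Suc e + tri a) * Qn i (Suc g) * Qn (g+e+s+3) (g+s+2)"
    unfolding Tm_def a0 by simp
  have t1: "Tm n d j (Suc i) (Suc g) = 2^(j*e + (tri a + a)) * Qn (Suc i) (Suc g) * Qn (g+e+s+2) (g+s+2)"
    unfolding Tm_def a1 a0(3,5) tri_Suc by simp
  have t2: "Tm n d j i g = 2^(j*e + (tri a + a)) * Qn i g * Qn (Suc j) j * Qn (g+e+s+2) (g+s+2)"
    unfolding Tm_def a2 a0(5) tri_Suc by simp
  define Y where "Y = (2::real)^(j*e + tri a)"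
  define G where "G = (2::real)^g"
  define A where "A = (2::real)^a"
  define E where "E = (2::real)^e"
  define S where "S = (2::real)^s"
  have ge: "1 \<le> G" "1 \<le> A" "1 \<le> E" "1 \<le> S" "0 < Y"
    by (simp_all add: G_def A_def E_def S_def Y_def)
  have PW: "(2::real)^(j*Suc e + tri a) = Y*(2*A*E)" "(2::real)^(j*e + (tri a + a)) = Y*A"
    "(2::real)^Suc g = 2*G" "(2::real)^Suc a = 2*A" "(2::real)^Suc i = 4*G*A" "(2::real)^Suc j = 4*A*E"
    "(2::real)^(g+e+s+3) = 8*G*E*S" "(2::real)^Suc e = 2*E"
    by (simp_all add: Y_def G_def A_def E_def S_def i_def j_def power_add algebra_simps)
  have q: "Qn i (Suc g) = Fq i / (Fq (Suc g) * Fq a)"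
    "Qn (Suc i) (Suc g) = Fq (Suc i) / (Fq (Suc g) * Fq (Suc a))"
    "Qn i g = Fq i / (Fq g * Fq (Suc a))"
    "Qn (Suc j) j = Fq (Suc j) / Fq j"
    "Qn (g+e+s+3) (g+s+2) = Fq (g+e+s+3) / (Fq (g+s+2) * Fq (Suc e))"
    "Qn (g+e+s+2) (g+s+2) = Fq (g+e+s+2) / (Fq (g+s+2) * Fq e)"
    by (simp_all add: Qn_def i_def Fq_Suc[of 0])
  define w1 where "w1 = 2*G - 1"
  define w2 where "w2 = 2*A - 1"
  define w3 where "w3 = 4*G*A - 1"
  define w4 where "w4 = 8*G*E*S - 1"
  define w5 where "w5 = 2*E - 1"
  define w6 where "w6 = 4*A*E - 1"
  have fq: "Fq (Suc g) = Fq g * w1" "Fq (Suc a) = Fq a * w2" "Fq (Suc i) = Fq i * w3"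
    "Fq (g+e+s+3) = Fq (g+e+s+2) * w4" "Fq (Suc e) = Fq e * w5" "Fq (Suc j) = Fq j * w6"
    unfolding w1_def w2_def w3_def w4_def w5_def w6_def
    by (rule Fq_step[OF _ PW(3)] Fq_step[OF _ PW(4)] Fq_step[OF _ PW(5)] Fq_step[OF _ PW(7)]
      Fq_step[OF _ PW(8)] Fq_step[OF _ PW(6)]; simp)+
  have "1 \<le> G*A" "1 \<le> G*E*S" "1 \<le> A*E" using ge by (simp_all add: one_le_mult')
  then have vp: "0 < w1" "0 < w2" "0 < w3" "0 < w4" "0 < w5" "0 < w6"
    unfolding w1_def w2_def w3_def w4_def w5_def w6_def using ge by linarith+
  then have nz: "w1 \<noteq> 0" "w2 \<noteq> 0" "w3 \<noteq> 0" "w4 \<noteq> 0" "w5 \<noteq> 0" "w6 \<noteq> 0" by simp_all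
  define C where "C = Y * A * Fq i * Fq (g+e+s+2) / (Fq g * Fq a * Fq (g+s+2) * Fq e)"
  have Cp: "0 < C" unfolding C_def using ge Fq_pos by simp
  define Dn where "Dn = w1*w2*w5"
  have r0: "Tm n d j i (Suc g) = C * (2*E*w4*w2) / Dn"
    unfolding t0 q fq PW C_def Dn_def using nz by (simp add: field_simps)
  have r1: "Tm n d j (Suc i) (Suc g) = C * (w3*w5) / Dn"
    unfolding t1 q fq PW C_def Dn_def using nz by (simp add: field_simps)
  have r2: "Tm n d j i g = C * (w6*w1*w5) / Dn"
    unfolding t2 q fq PW C_def Dn_def using nz by (simp add: field_simps)
  have Dp: "0 < Dn" unfolding Dn_def using vp by simp
  have "w3*w5 + w6*w1*w5 < 2*E*w4*w2"
    using polyBK[OF ge(1-4)] unfolding w1_def w2_def w3_def w4_def w5_def w6_def by (simp add: algebra_simps)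
  then have "C * (w3*w5) + C * (w6*w1*w5) < C * (2*E*w4*w2)"
    using Cp by (simp add: distrib_left[symmetric])
  then show ?thesis unfolding n_def[symmetric] r0 r1 r2 using Dp by (simp add: add_divide_distrib[symmetric] divide_strict_right_mono)
qed


lemma Tm_pos: "0 < Tm n d j i h"
  unfolding Tm_def using Qn_pos by simp

lemma mono_gen:
  assumes "i \<le> d" "j \<le> d" "d+d+1 \<le> n" "i - j \<le> h" "h < min i (d-j)"
  shows "Tm n d j i h \<le> Tm n d j i (Suc h)"
proof -
  define k where "k = i - h - 1"
  define e where "e = j - k - 1"
  define f where "f = d - j - h - 1"
  define s where "s = n - (d+d+1)"
  have h: "h < i" "h < d - j" using assms(5) by simp_all
  have E: "n = d+d+1+s" "d = h+k+2+e+f" "i = h+1+k" "j = k+1+e"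
    unfolding k_def e_def f_def s_def using assms(1-4) h by arith+
  show ?thesis using monoD[of h k e f s] by (simp only: E)
qed

lemma sum_sign:
  fixes f :: "nat \<Rightarrow> real"
  assumes "hi \<le> i"
  shows "(\<Sum>h=lo..hi. (-1)^(i-h) * f h) = (-1)^(i-hi) * (\<Sum>h=lo..hi. (-1)^(hi-h) * f h)"
  unfolding sum_distrib_left
proof (rule sum.cong)
  fix h assume "h \<in> {lo..hi}"
  then have "i - h = (i - hi) + (hi - h)" using assms by auto
  then show "(-1)^(i-h) * f h = (-1)^(i-hi) * ((-1)^(hi-h) * f h)" by (simp add: power_add)
qed simp

lemma absG:
  assumes "i \<le> d" "j \<le> d" "d+d+1 \<le> n"
  shows "\<bar>G (int n) (int d) (int j) (int i)\<bar> = \<bar>\<Sum>h=i-j..min i (d-j). (-1)^(min i (d-j)-h) * Tm n d j i h\<bar>"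
proof -
  have "G (int n) (int d) (int j) (int i) = (\<Sum>h=i-j..min i (d-j). (-1)^(i-h) * Tm n d j i h)"
    using assms by (intro G_nat) simp_all
  also have "\<dots> = (-1)^(i - min i (d-j)) * (\<Sum>h=i-j..min i (d-j). (-1)^(min i (d-j)-h) * Tm n d j i h)"
    by (rule sum_sign) simp
  moreover have "\<bar>(-1::real)^(i - min i (d-j))\<bar> = 1" by simp
  ultimately show ?thesis by (simp only: abs_mult mult_1)
qed

lemma bounds:
  assumes "i \<le> d" "j \<le> d" "d+d+1 \<le> n" "1 \<le> j"
  defines "lo \<equiv> i - j" and "hi \<equiv> min i (d-j)"
  shows "\<bar>G (int n) (int d) (int j) (int i)\<bar> \<le> Tm n d j i hi"
    "lo = hi \<Longrightarrow> \<bar>G (int n) (int d) (int j) (int i)\<bar> = Tm n d j i hi"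
    "lo < hi \<Longrightarrow> Tm n d j i hi - Tm n d j i (hi - 1) \<le> \<bar>G (int n) (int d) (int j) (int i)\<bar>"
proof -
  have lh: "lo \<le> hi" unfolding lo_def hi_def using assms by auto
  have mono: "\<And>h. lo \<le> h \<Longrightarrow> h < hi \<Longrightarrow> Tm n d j i h \<le> Tm n d j i (Suc h)"
    unfolding lo_def hi_def using assms by (intro mono_gen) auto
  note A = alt_sum[of lo hi "Tm n d j i", OF lh less_imp_le[OF Tm_pos] mono]
  have G0: "\<bar>G (int n) (int d) (int j) (int i)\<bar> = \<bar>\<Sum>h=lo..hi. (-1)^(hi-h) * Tm n d j i h\<bar>"
    unfolding lo_def hi_def by (rule absG[OF assms(1-3)])
  have G: "\<bar>G (int n) (int d) (int j) (int i)\<bar> = (\<Sum>h=lo..hi. (-1)^(hi-h) * Tm n d j i h)"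
    unfolding G0 by (rule abs_of_nonneg[OF A(1)])
  show "\<bar>G (int n) (int d) (int j) (int i)\<bar> \<le> Tm n d j i hi" using G A(2) by linarith
  show "\<bar>G (int n) (int d) (int j) (int i)\<bar> = Tm n d j i hi" if "lo = hi"
  proof -
    have "(\<Sum>h=lo..hi. (-1)^(hi-h) * Tm n d j i h) = (-1)^(hi-hi) * Tm n d j i hi" using that by simp
    then show ?thesis using G by simp
  qed
  show "Tm n d j i hi - Tm n d j i (hi - 1) \<le> \<bar>G (int n) (int d) (int j) (int i)\<bar>" if "lo < hi"
  proof -
    have "Tm n d j i hi - Tm n d j i (hi - 1) \<le> (\<Sum>h=lo..hi. (-1)^(hi-h) * Tm n d j i h)"
      using alt_sum(3)[of lo hi "Tm n d j i"] lh mono Tm_pos less_imp_le that by blast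
    then show ?thesis using G by linarith
  qed
qed


lemma caseA_w: "D = g+b+p+3 \<Longrightarrow> J = Suc b \<Longrightarrow> N = D+D+1+s \<Longrightarrow>
  Tm N D J (Suc (Suc g)) (Suc (Suc g)) + Tm N D J (Suc g) g < Tm N D J (Suc g) (Suc g)"
  using caseA[of g b p s] by simp

lemma caseA0_w: "D = b+p+2 \<Longrightarrow> J = Suc b \<Longrightarrow> N = D+D+1+s \<Longrightarrow>
  Tm N D J 1 1 < Tm N D J 0 0"
  using caseA0[of b p s] by simp

lemma caseB_w: "D = g+a+e+2 \<Longrightarrow> J = a+1+e \<Longrightarrow> I = Suc g + a \<Longrightarrow> N = D+D+1+s \<Longrightarrow>
  Tm N D J (Suc I) (Suc g) + Tm N D J I g < Tm N D J I (Suc g)"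
  using caseB[of g a e s] by simp

lemma caseB0_w: "D = a+1+e \<Longrightarrow> J = a+1+e \<Longrightarrow> N = D+D+1+s \<Longrightarrow>
  Tm N D J (Suc a) 0 < Tm N D J a 0"
  using caseB0[of a e s] by simp

theorem theorem3p7:
  fixes n d i j :: int
  assumes "d \<ge> 1" and "n \<ge> 2 * d + 1"
    and "0 \<le> i" and "i \<le> d - 1" and "1 \<le> j" and "j \<le> d"
  shows "\<bar>G n d j (i + 1)\<bar> < \<bar>G n d j i\<bar>"
proof -
  define N where "N = nat n"
  define D where "D = nat d"
  define I where "I = nat i"
  define J where "J = nat j"
  have eq: "n = int N" "d = int D" "i + 1 = int (Suc I)" "i = int I" "j = int J"
    using assms by (simp_all add: N_def D_def I_def J_def)
  have h: "1 \<le> D" "D+D+1 \<le> N" "Suc I \<le> D" "1 \<le> J" "J \<le> D"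
    using assms unfolding eq by simp_all
  define s where "s = N - (D+D+1)"
  have Ns: "N = D+D+1+s" using h unfolding s_def by simp
  have I1: "I \<le> D" using h by simp
  note bI = bounds[OF I1 h(5) h(2) h(4)]
  note bS = bounds[OF h(3) h(5) h(2) h(4)]
  show ?thesis unfolding eq(3) unfolding eq(1,2,4,5)
  proof (cases "I + J + 1 \<le> D")
    case True
    have hi: "min I (D - J) = I" "min (Suc I) (D - J) = Suc I" using True by simp_all
    have S: "\<bar>G (int N) (int D) (int J) (int (Suc I))\<bar> \<le> Tm N D J (Suc I) (Suc I)"
      using bS(1) unfolding hi .
    show "\<bar>G (int N) (int D) (int J) (int (Suc I))\<bar> < \<bar>G (int N) (int D) (int J) (int I)\<bar>"
    proof (cases I)
      case 0
      have "\<bar>G (int N) (int D) (int J) (int I)\<bar> = Tm N D J I I" using bI(2) unfolding hi 0 by simp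
      moreover have "Tm N D J 1 1 < Tm N D J 0 0"
        by (rule caseA0_w[of D "J-1" "D-J-1" J N s]) (use True h Ns 0 in simp_all)
      ultimately show ?thesis using S 0 by simp
    next
      case (Suc g)
      have lo: "I - J < min I (D - J)" using Suc h hi by simp
      have X: "Tm N D J I (min I (D-J)) - Tm N D J I (min I (D-J) - 1) \<le> \<bar>G (int N) (int D) (int J) (int I)\<bar>"
        by (rule bI(3)[OF lo])
      have "Tm N D J I I - Tm N D J I g \<le> \<bar>G (int N) (int D) (int J) (int I)\<bar>"
        using X unfolding hi(1) using Suc by simp
      moreover have "Tm N D J (Suc (Suc g)) (Suc (Suc g)) + Tm N D J (Suc g) g < Tm N D J (Suc g) (Suc g)"
        by (rule caseA_w[of D g "J-1" "D-I-J-1" J N s]) (use True h Ns Suc in simp_all)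
      ultimately show ?thesis using S Suc by simp
    qed
  next
    case False
    define H where "H = D - J"
    have hi: "min I (D - J) = H" "min (Suc I) (D - J) = H" using False h unfolding H_def by simp_all
    have S: "\<bar>G (int N) (int D) (int J) (int (Suc I))\<bar> \<le> Tm N D J (Suc I) H"
      using bS(1) unfolding hi .
    show "\<bar>G (int N) (int D) (int J) (int (Suc I))\<bar> < \<bar>G (int N) (int D) (int J) (int I)\<bar>"
    proof (cases H)
      case 0
      have lo: "I - J = H" using h 0 unfolding H_def by simp
      have "\<bar>G (int N) (int D) (int J) (int I)\<bar> = Tm N D J I 0" using bI(2) unfolding hi lo 0 by simp
      moreover have "Tm N D J (Suc I) 0 < Tm N D J I 0"
        by (rule caseB0_w[of D I "J-I-1" J N s]) (use h Ns 0 H_def in simp_all)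
      ultimately show ?thesis using S 0 by simp
    next
      case (Suc g)
      have lo: "I - J < H" using h False Suc unfolding H_def by arith
      have "Tm N D J I H - Tm N D J I g \<le> \<bar>G (int N) (int D) (int J) (int I)\<bar>"
        using bI(3) lo unfolding hi Suc by simp
      moreover have "Tm N D J (Suc I) (Suc g) + Tm N D J I g < Tm N D J I (Suc g)"
        by (rule caseB_w[of D g "I-H" "J-(I-H)-1" J I N s]) (use False h Ns Suc H_def in simp_all)
      ultimately show ?thesis using S Suc by simp
    qed
  qed
qed

end
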